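(* Let $q$ be a distribution over prompts $\mathbf{x}$, let $p_{\mathrm{data}}(\cdot\mid\mathbf{x})$ be the target conditional distribution of responses, and let $\{p_{\boldsymbol{\theta}}(\cdot\mid\mathbf{x}) : \boldsymbol{\theta}\in\boldsymbol{\Theta}\}$ be a parametrized family of conditional distributions. Let $\ell(t)=\log(1+\exp(-t))$ be the logistic loss, let $\lambda>0$, and for $\boldsymbol{\theta},\boldsymbol{\theta}_t\in\boldsymbol{\Theta}$ define $$L_{\mathrm{SPIN}}(\boldsymbol{\theta},\boldsymbol{\theta}_t)=\mathbb{E}_{\mathbf{x}\sim q(\cdot),\,\mathbf{y}\sim p_{\mathrm{data}}(\cdot\mid\mathbf{x}),\,\mathbf{y}'\sim p_{\boldsymbol{\theta}_t}(\cdot\mid\mathbf{x})}\Big[\ell\Big(\lambda\log\frac{p_{\boldsymbol{\theta}}(\mathbf{y}\mid\mathbf{x})}{p_{\boldsymbol{\theta}_t}(\mathbf{y}\mid\mathbf{x})}-\lambda\log\frac{p_{\boldsymbol{\theta}}(\mathbf{y}'\mid\mathbf{x})}{p_{\boldsymbol{\theta}_t}(\mathbf{y}'\mid\mathbf{x})}\Big)\Big].$$ Suppose that the conditional distribution (normalized over $\mathbf{y}$ for each $\mathbf{x}$) proportional to $p_{\boldsymbol{\theta}_t}(\mathbf{y}\mid\mathbf{x})\big(p_{\mathrm{data}}(\mathbf{y}\mid\mathbf{x})/p_{\boldsymbol{\theta}_t}(\mathbf{y}\mid\mathbf{x})\big)^{1/\lambda}$ lies in $\{p_{\boldsymbol{\theta}}(\cdot\mid\mathbf{x})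 : \boldsymbol{\theta}\in\boldsymbol{\Theta}\}$, and that $\boldsymbol{\theta}_{t+1}$ is a global minimum of $\boldsymbol{\theta}\mapsto L_{\mathrm{SPIN}}(\boldsymbol{\theta},\boldsymbol{\theta}_t)$. Then $$p_{\boldsymbol{\theta}_{t+1}}(\mathbf{y}\mid\mathbf{x})\propto p_{\boldsymbol{\theta}_t}(\mathbf{y}\mid\mathbf{x})\big(p_{\mathrm{data}}(\mathbf{y}\mid\mathbf{x})/p_{\boldsymbol{\theta}_t}(\mathbf{y}\mid\mathbf{x})\big)^{1/\lambda},$$ where proportionality is in $\mathbf{y}$ for each fixed $\mathbf{x}$.
   Context: Prompts $\mathbf{x}$ and responses $\mathbf{y}$ are token sequences; $p_{\boldsymbol{\theta}}(\mathbf{y}\mid\mathbf{x})$ is the conditional probability assigned by the model with parameter $\boldsymbol{\theta}$. All conditional probabilities are assumed positive so that log-ratios are well defined. *)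

theory Defs
  imports "HOL-Probability.Probability"
begin

definition logistic_loss :: "real \<Rightarrow> real" where
  "logistic_loss t = ln (1 + exp (- t))"

text \<open>SPIN population loss L_SPIN(theta, theta_t), as an expectation (nonnegative integral,
  so it is always well defined, possibly infinite) over x ~ q, y ~ p_data(.|x), y' ~ p_theta_t(.|x)
  (independent given x).\<close>
definition L_SPIN ::
  "'x pmf \<Rightarrow> ('x \<Rightarrow> 'y pmf) \<Rightarrow> ('th \<Rightarrow> 'x \<Rightarrow> 'y pmf) \<Rightarrow> real \<Rightarrow> 'th \<Rightarrow> 'th \<Rightarrow> ennreal" where
  "L_SPIN q pdata p lam \<theta> \<theta>t =
     (\<integral>\<^sup>+ x. (\<integral>\<^sup>+ yy.
        ennreal (logistic_loss
          (lam * ln (pmf (p \<theta> x) (fst yy) / pmf (p \<theta>t x) (fst yy))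
           - lam * ln (pmf (p \<theta> x) (snd yy) / pmf (p \<theta>t x) (snd yy))))
      \<partial>(measure_pmf (pair_pmf (pdata x) (p \<theta>t x)))) \<partial>(measure_pmf q))"

definition proportional :: "('y \<Rightarrow> real) \<Rightarrow> ('y \<Rightarrow> real) \<Rightarrow> bool" where
  "proportional f g \<longleftrightarrow> (\<exists>c>0. \<forall>y. f y = c * g y)"

end

theory Submission
  imports Defs
begin
lemma key_ineq:
  fixes a b v :: real assumes a: "a>0" and b: "b>0" and v: "v>0"
  shows "a*ln(1+b/a) + b*ln(1+a/b) \<le> a*ln(1+v) + b*ln(1+1/v)"
    and "a*ln(1+b/a) + b*ln(1+a/b) = a*ln(1+v) + b*ln(1+1/v) \<Longrightarrow> v = b/a"
proof -
  define x1 where "x1 = (a+b)/((1+v)*a)"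
  define x2 where "x2 = ((a+b) * v) / ((1+v) * b)"
  have x1p: "x1 > 0" and x2p: "x2 > 0" using a b v by (auto simp: x1_def x2_def)
  have ab: "a+b \<noteq> 0" "a \<noteq> 0" "b \<noteq> 0" "1+v \<noteq> 0" "v \<noteq> 0" "a + a * v \<noteq> 0" "b + b * v \<noteq> 0" "b * v + b \<noteq> 0" "a * v + a \<noteq> 0" "b * v + b * (v * v) \<noteq> 0"
    using a b v mult_pos_pos[of a v] mult_pos_pos[of b v] mult_pos_pos[of b "v * v"] mult_pos_pos[of v v] by linarith+
  have "x1 * (1+v) = 1+b/a" using ab by (simp add: x1_def field_simps)
  hence q1: "1+v = (1+b/a) / x1" using x1p by (simp add: eq_divide_eq mult.commute)
  have p1: "1+b/a > 0" using a b by (simp add: add_pos_pos)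
  have e1: "ln(1+v) = ln(1+b/a) - ln x1" unfolding q1 using p1 x1p by (rule ln_divide_pos)
  have "x2 * (1+1/v) = 1+a/b" using ab by (simp add: x2_def field_simps)
  hence q2: "1+1/v = (1+a/b) / x2" using x2p by (simp add: eq_divide_eq mult.commute)
  have p2: "1+a/b > 0" using a b by (simp add: add_pos_pos)
  have e2: "ln(1+1/v) = ln(1+a/b) - ln x2" unfolding q2 using p2 x2p by (rule ln_divide_pos)
  have s: "a*(x1-1) + b*(x2-1) = 0" using ab by (simp add: x1_def x2_def field_simps)
  have l1: "ln x1 \<le> x1 - 1" "ln x2 \<le> x2 - 1" using x1p x2p ln_le_minus_one by auto
  have d: "a*ln(1+v) + b*ln(1+1/v) - (a*ln(1+b/a) + b*ln(1+a/b)) = -(a*ln x1 + b * ln x2)"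
    by (simp add: e1 e2 algebra_simps)
  have m1: "a * ln x1 \<le> a*(x1-1)" "b * ln x2 \<le> b*(x2-1)" using l1 a b by auto
  show "a*ln(1+b/a) + b*ln(1+a/b) \<le> a*ln(1+v) + b*ln(1+1/v)" using d m1 s by linarith
  assume eq: "a*ln(1+b/a) + b*ln(1+a/b) = a*ln(1+v) + b*ln(1+1/v)"
  have "a * ln x1 = a*(x1-1)" using d m1 s eq by linarith
  hence "ln x1 = x1 - 1" using a by simp
  hence "x1 = 1" using ln_eq_minus_one x1p by blast
  thus "v = b/a" using a b v by (simp add: x1_def field_simps)
qed

lemma logistic_loss_nonneg: "logistic_loss t \<ge> 0"
  unfolding logistic_loss_def by (simp add: add_pos_pos)

lemma pair_bound:
  fixes a b ua ub :: real assumes a: "a>0" and b: "b>0"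
  shows "a*ln(1+b/a) + b*ln(1+a/b) \<le> a * logistic_loss (ua - ub) + b * logistic_loss (ub - ua)"
    and "a*ln(1+b/a) + b*ln(1+a/b) = a * logistic_loss (ua - ub) + b * logistic_loss (ub - ua)
         \<Longrightarrow> exp (ub - ua) = b/a"
proof -
  define v where "v = exp (ub - ua)"
  have v: "v > 0" by (simp add: v_def)
  have l1: "logistic_loss (ua - ub) = ln (1+v)" by (simp add: logistic_loss_def v_def)
  have l2: "logistic_loss (ub - ua) = ln (1+1/v)"
    by (simp add: logistic_loss_def v_def exp_minus field_simps exp_diff)
  show "a*ln(1+b/a) + b*ln(1+a/b) \<le> a * logistic_loss (ua - ub) + b * logistic_loss (ub - ua)"
    using key_ineq(1)[OF a b v] by (simp add: l1 l2)
  assume "a*ln(1+b/a) + b*ln(1+a/b) = a * logistic_loss (ua - ub) + b * logistic_loss (ub - ua)"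
  thus "exp (ub - ua) = b/a" using key_ineq(2)[OF a b v] by (simp add: l1 l2 v_def)
qed

lemma ennreal_double_le: "(a::ennreal) + a \<le> b + b \<Longrightarrow> a \<le> b"
  by (meson add_strict_mono not_le)

theorem theorem5p4:
  fixes q :: "'x pmf" and pdata :: "'x \<Rightarrow> 'y pmf" and p :: "'th \<Rightarrow> 'x \<Rightarrow> 'y pmf"
    and \<Theta> :: "'th set" and lam :: real and \<theta>t \<theta>t1 :: 'th
  assumes lam_pos: "lam > 0"
    and pdata_pos: "\<And>x y. pmf (pdata x) y > 0"
    and p_pos: "\<And>\<theta> x y. \<theta> \<in> \<Theta> \<Longrightarrow> pmf (p \<theta> x) y > 0"
    and \<theta>t_in: "\<theta>t \<in> \<Theta>"
    and realizable: "\<exists>\<theta>\<in>\<Theta>. \<forall>x. proportional (pmf (p \<theta> x))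
        (\<lambda>y. pmf (p \<theta>t x) y * (pmf (pdata x) y / pmf (p \<theta>t x) y) powr (1 / lam))"
    and \<theta>t1_in: "\<theta>t1 \<in> \<Theta>"
    and \<theta>t1_min: "\<And>\<theta>. \<theta> \<in> \<Theta> \<Longrightarrow> L_SPIN q pdata p lam \<theta>t1 \<theta>t \<le> L_SPIN q pdata p lam \<theta> \<theta>t"
  shows "\<forall>x \<in> set_pmf q. proportional (pmf (p \<theta>t1 x))
        (\<lambda>y. pmf (p \<theta>t x) y * (pmf (pdata x) y / pmf (p \<theta>t x) y) powr (1 / lam))"
proof -
  define u where "u = (\<lambda>\<theta> x y. lam * ln (pmf (p \<theta> x) y / pmf (p \<theta>t x) y))"
  define ell where "ell = (\<lambda>\<theta> x (z::'y\<times>'y). logistic_loss (u \<theta> x (fst z) - u \<theta> x (snd z)))"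
  define w where "w = (\<lambda>x (z::'y\<times>'y). pmf (pdata x) (fst z) * pmf (p \<theta>t x) (snd z))"
  define S where "S = (\<lambda>\<theta> x. \<integral>\<^sup>+ z. ennreal (ell \<theta> x z) \<partial>measure_pmf (pair_pmf (pdata x) (p \<theta>t x)))"
  define G where "G = (\<lambda>x z. w x z * ln (1 + w x (prod.swap z) / w x z)
                           + w x (prod.swap z) * ln (1 + w x z / w x (prod.swap z)))"
  define H where "H = (\<lambda>\<theta> x z. w x z * ell \<theta> x z + w x (prod.swap z) * ell \<theta> x (prod.swap z))"
  have L_eq: "L_SPIN q pdata p lam \<theta> \<theta>t = (\<integral>\<^sup>+x. S \<theta> x \<partial>q)" for \<theta>
    unfolding L_SPIN_def S_def ell_def u_def by simp
  have ell_nn: "ell \<theta> x z \<ge> 0" for \<theta> x z unfolding ell_def by (rule logistic_loss_nonneg)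
  have w_pos: "w x z > 0" for x z unfolding w_def
    using pdata_pos p_pos[OF \<theta>t_in] by simp
  have S_count: "S \<theta> x = (\<integral>\<^sup>+ z. ennreal (w x z * ell \<theta> x z) \<partial>count_space UNIV)" for \<theta> x
    unfolding S_def nn_integral_measure_pmf
    by (intro nn_integral_cong) (auto simp: w_def pmf_pair ennreal_mult ell_nn)
  have bij: "bij_betw prod.swap (UNIV::('y\<times>'y) set) UNIV"
    by (simp add: bij_swap)
  have S_swap: "S \<theta> x = (\<integral>\<^sup>+ z. ennreal (w x (prod.swap z) * ell \<theta> x (prod.swap z)) \<partial>count_space UNIV)" for \<theta> x
    unfolding S_count using nn_integral_bij_count_space[OF bij, of "\<lambda>z. ennreal (w x z * ell \<theta> x z)"]
    by simp
  have D_eq: "S \<theta> x + S \<theta> x = (\<integral>\<^sup>+ z. ennreal (H \<theta> x z) \<partial>count_space UNIV)" for \<theta> x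
  proof -
    have "S \<theta> x + S \<theta> x = (\<integral>\<^sup>+ z. ennreal (w x z * ell \<theta> x z) + ennreal (w x (prod.swap z) * ell \<theta> x (prod.swap z)) \<partial>count_space UNIV)"
      by (subst nn_integral_add) (auto simp: S_count[symmetric] S_swap[symmetric])
    also have "\<dots> = (\<integral>\<^sup>+ z. ennreal (H \<theta> x z) \<partial>count_space UNIV)"
      by (intro nn_integral_cong) (auto simp: H_def ennreal_plus[symmetric] ell_nn w_pos less_imp_le simp del: ennreal_plus)
    finally show ?thesis .
  qed
  have ell_swap: "ell \<theta> x (prod.swap z) = logistic_loss (u \<theta> x (snd z) - u \<theta> x (fst z))" for \<theta> x z
    by (simp add: ell_def)
  have G_le: "G x z \<le> H \<theta> x z" for \<theta> x z
    unfolding G_def H_def ell_swap unfolding ell_def using pair_bound(1)[OF w_pos w_pos] by simp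
  have G_eq: "exp (u \<theta> x (snd z) - u \<theta> x (fst z)) = w x (prod.swap z) / w x z" if "G x z = H \<theta> x z" for \<theta> x z
    using that unfolding G_def H_def ell_swap unfolding ell_def using pair_bound(2)[OF w_pos w_pos] by simp
  have G_le_any: "G x z \<le> H \<theta> x z" for \<theta> x z by (rule G_le)
  have G_nn: "G x z \<ge> 0" for x z
  proof -
    have "ln (1 + w x (prod.swap z) / w x z) \<ge> 0" "ln (1 + w x z / w x (prod.swap z)) \<ge> 0"
      using w_pos[of x z] w_pos[of x "prod.swap z"] by simp_all
    thus ?thesis unfolding G_def using w_pos[of x z] w_pos[of x "prod.swap z"] by simp
  qed
  from realizable obtain \<theta>s where \<theta>s_in: "\<theta>s \<in> \<Theta>" and
    propr: "\<forall>x. proportional (pmf (p \<theta>s x))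
        (\<lambda>y. pmf (p \<theta>t x) y * (pmf (pdata x) y / pmf (p \<theta>t x) y) powr (1 / lam))" by blast
  have "\<forall>x. \<exists>c>0. \<forall>y. pmf (p \<theta>s x) y = c * (pmf (p \<theta>t x) y * (pmf (pdata x) y / pmf (p \<theta>t x) y) powr (1 / lam))"
    using propr by (simp add: proportional_def)
  then obtain c where c_pos: "\<And>x. c x > 0" and
    c_eq: "\<And>x y. pmf (p \<theta>s x) y = c x * (pmf (p \<theta>t x) y * (pmf (pdata x) y / pmf (p \<theta>t x) y) powr (1 / lam))"
    by metis
  have Qp: "pmf (p \<theta>t x) y > 0" for x y using p_pos[OF \<theta>t_in] .
  have Pp: "pmf (pdata x) y > 0" for x y using pdata_pos .
  have rp: "pmf (pdata x) y / pmf (p \<theta>t x) y > 0" for x y using Pp Qp by simp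
  have us: "u \<theta>s x y = lam * ln (c x) + ln (pmf (pdata x) y / pmf (p \<theta>t x) y)" for x y
  proof -
    have "pmf (p \<theta>s x) y / pmf (p \<theta>t x) y = c x * (pmf (pdata x) y / pmf (p \<theta>t x) y) powr (1 / lam)"
      using c_eq[of x y] Qp[of x y] by (simp add: field_simps)
    hence "ln (pmf (p \<theta>s x) y / pmf (p \<theta>t x) y) = ln (c x) + (1/lam) * ln (pmf (pdata x) y / pmf (p \<theta>t x) y)"
      using c_pos[of x] rp[of x y] Pp[of x y] Qp[of x y] by (simp add: ln_mult ln_powr)
    thus ?thesis using lam_pos by (simp add: u_def field_simps)
  qed
  have exp_s: "exp (u \<theta>s x b - u \<theta>s x a) = w x (b, a) / w x (a, b)" for x a b
  proof -
    have "exp (u \<theta>s x b - u \<theta>s x a) = exp (ln (pmf (pdata x) b / pmf (p \<theta>t x) b)) / exp (ln (pmf (pdata x) a / pmf (p \<theta>t x) a))"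
      by (simp add: us exp_diff[symmetric])
    also have "\<dots> = (pmf (pdata x) b / pmf (p \<theta>t x) b) / (pmf (pdata x) a / pmf (p \<theta>t x) a)"
      using rp by simp
    also have "\<dots> = w x (b, a) / w x (a, b)"
      using Pp[of x a] Pp[of x b] Qp[of x a] Qp[of x b] by (simp add: w_def field_simps)
    finally show ?thesis .
  qed
  have ell_s: "ell \<theta>s x z = ln (1 + w x (prod.swap z) / w x z)" for x z
    using exp_s[of x "snd z" "fst z"]
    by (cases z) (simp add: ell_def logistic_loss_def exp_minus_inverse exp_diff[symmetric] )
  have S_s_bound: "S \<theta>s x \<le> 1" for x
  proof -
    have "S \<theta>s x \<le> (\<integral>\<^sup>+ z. ennreal (w x (prod.swap z)) \<partial>count_space UNIV)"
      unfolding S_count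
    proof (intro nn_integral_mono ennreal_leI)
      fix z
      have "ln (1 + w x (prod.swap z) / w x z) \<le> w x (prod.swap z) / w x z"
        using w_pos[of x z] w_pos[of x "prod.swap z"] by (intro ln_add_one_self_le_self) simp
      hence "w x z * ell \<theta>s x z \<le> w x z * (w x (prod.swap z) / w x z)"
        unfolding ell_s using w_pos[of x z] by (intro mult_left_mono) auto
      thus "w x z * ell \<theta>s x z \<le> w x (prod.swap z)" using w_pos[of x z] by simp
    qed
    also have "\<dots> = (\<integral>\<^sup>+ z. ennreal (w x z) \<partial>count_space UNIV)"
      using nn_integral_bij_count_space[OF bij, of "\<lambda>z. ennreal (w x z)"] by simp
    also have "\<dots> = (\<integral>\<^sup>+ z. 1 \<partial>measure_pmf (pair_pmf (pdata x) (p \<theta>t x)))"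
      unfolding nn_integral_measure_pmf
      by (intro nn_integral_cong) (auto simp: w_def pmf_pair)
    also have "\<dots> = 1" by simp
    finally show ?thesis .
  qed
  have S_s_fin: "S \<theta>s x \<noteq> \<infinity>" for x using S_s_bound[of x] by (auto simp: top_unique)
  have H_s: "H \<theta>s x z = G x z" for x z
  proof -
    have "ell \<theta>s x (prod.swap z) = ln (1 + w x z / w x (prod.swap z))"
      using ell_s[of x "prod.swap z"] by simp
    thus ?thesis unfolding H_def G_def ell_s by simp
  qed
  have S_min: "S \<theta>s x \<le> S \<theta> x" for \<theta> x
  proof (rule ennreal_double_le)
    show "S \<theta>s x + S \<theta>s x \<le> S \<theta> x + S \<theta> x"
      unfolding D_eq H_s by (intro nn_integral_mono ennreal_leI G_le)
  qed
  have Ls_bound: "L_SPIN q pdata p lam \<theta>s \<theta>t \<le> 1"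
  proof -
    have "L_SPIN q pdata p lam \<theta>s \<theta>t \<le> (\<integral>\<^sup>+x. 1 \<partial>q)"
      unfolding L_eq by (intro nn_integral_mono S_s_bound)
    thus ?thesis by simp
  qed
  have Lmin: "L_SPIN q pdata p lam \<theta>t1 \<theta>t \<le> L_SPIN q pdata p lam \<theta>s \<theta>t"
    using \<theta>t1_min[OF \<theta>s_in] .
  have AE1: "AE x in q. S \<theta>t1 x \<le> S \<theta>s x"
  proof (rule ccontr)
    assume nAE: "\<not> (AE x in q. S \<theta>t1 x \<le> S \<theta>s x)"
    have "(\<integral>\<^sup>+x. S \<theta>s x \<partial>q) < (\<integral>\<^sup>+x. S \<theta>t1 x \<partial>q)"
    proof (rule nn_integral_less)
      show "(\<integral>\<^sup>+x. S \<theta>s x \<partial>q) \<noteq> \<infinity>" using Ls_bound unfolding L_eq by (auto simp: top_unique)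
      show "AE x in q. S \<theta>s x \<le> S \<theta>t1 x" by (simp add: S_min)
    qed (use nAE in simp_all)
    thus False using Lmin unfolding L_eq by simp
  qed
  show ?thesis
  proof
    fix x assume xq: "x \<in> set_pmf q"
    have Seq: "S \<theta>t1 x = S \<theta>s x" using AE1 xq S_min[of x \<theta>t1] by (simp add: AE_measure_pmf_iff antisym)
    have Hle: "H \<theta>t1 x z \<le> G x z" for z
    proof -
      have "AE z in count_space UNIV. ennreal (H \<theta>t1 x z) \<le> ennreal (G x z)"
      proof (rule ccontr)
        assume nAE: "\<not> (AE z in count_space UNIV. ennreal (H \<theta>t1 x z) \<le> ennreal (G x z))"
        have "(\<integral>\<^sup>+z. ennreal (G x z) \<partial>count_space UNIV) < (\<integral>\<^sup>+z. ennreal (H \<theta>t1 x z) \<partial>count_space UNIV)"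
        proof (rule nn_integral_less)
          show "(\<integral>\<^sup>+z. ennreal (G x z) \<partial>count_space UNIV) \<noteq> \<infinity>"
            using D_eq[of \<theta>s x, symmetric] S_s_fin[of x] unfolding H_s by simp
          show "AE z in count_space UNIV. ennreal (G x z) \<le> ennreal (H \<theta>t1 x z)"
            by (simp add: AE_count_space ennreal_leI G_le)
        qed (use nAE in simp_all)
        thus False using D_eq[of \<theta>s x] D_eq[of \<theta>t1 x] Seq unfolding H_s by simp
      qed
      hence "ennreal (H \<theta>t1 x z) \<le> ennreal (G x z)" by (cases z) (simp add: AE_count_space)
      thus ?thesis using G_nn[of x z] by (simp add: ennreal_le_iff)
    qed
    have ex1: "exp (u \<theta>t1 x b - u \<theta>t1 x a) = w x (b, a) / w x (a, b)" for a b
      using G_eq[of x "(a,b)" \<theta>t1] Hle[of "(a,b)"] G_le[of x "(a,b)" \<theta>t1] by simp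
    show "proportional (pmf (p \<theta>t1 x))
        (\<lambda>y. pmf (p \<theta>t x) y * (pmf (pdata x) y / pmf (p \<theta>t x) y) powr (1 / lam))"
      unfolding proportional_def
    proof -
      define a0 :: 'y where "a0 = undefined"
      define r where "r = (\<lambda>y. pmf (pdata x) y / pmf (p \<theta>t x) y)"
      define s where "s = (\<lambda>y. pmf (p \<theta>t1 x) y / pmf (p \<theta>t x) y)"
      define K where "K = exp ((u \<theta>t1 x a0 - ln (r a0)) / lam)"
      have sp: "s y > 0" for y using p_pos[OF \<theta>t1_in, of x y] Qp[of x y] by (simp add: s_def)
      have rpos: "r y > 0" for y using rp by (simp add: r_def)
      have us1: "u \<theta>t1 x y = lam * ln (s y)" for y by (simp add: u_def s_def)
      have "\<forall>y. pmf (p \<theta>t1 x) y = K * (pmf (p \<theta>t x) y * r y powr (1 / lam))"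
      proof
        fix y
        have "w x (y, a0) / w x (a0, y) = r y / r a0"
          using Pp[of x a0] Pp[of x y] Qp[of x a0] Qp[of x y] by (simp add: w_def r_def field_simps)
        hence "exp (u \<theta>t1 x y - u \<theta>t1 x a0) = r y / r a0" using ex1[of y a0] by simp
        hence "u \<theta>t1 x y - u \<theta>t1 x a0 = ln (r y / r a0)" by (metis ln_exp)
        hence d: "u \<theta>t1 x y - u \<theta>t1 x a0 = ln (r y) - ln (r a0)" using rpos ln_divide_pos by simp
        have "ln (s y) = (u \<theta>t1 x a0 - ln (r a0)) / lam + (1/lam) * ln (r y)"
          using d us1[of y] lam_pos by (simp add: field_simps)
        hence "s y = exp ((u \<theta>t1 x a0 - ln (r a0)) / lam + (1/lam) * ln (r y))"
          using sp[of y] by (metis exp_ln)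
        also have "\<dots> = K * r y powr (1 / lam)"
          using rpos[of y] by (simp add: K_def exp_add powr_def)
        finally have "s y = K * r y powr (1 / lam)" .
        thus "pmf (p \<theta>t1 x) y = K * (pmf (p \<theta>t x) y * r y powr (1 / lam))"
          using Qp[of x y] by (simp add: s_def field_simps)
      qed
      moreover have "K > 0" by (simp add: K_def)
      ultimately show "\<exists>c>0. \<forall>y. pmf (p \<theta>t1 x) y = c * (pmf (p \<theta>t x) y * (pmf (pdata x) y / pmf (p \<theta>t x) y) powr (1 / lam))"
        unfolding r_def by blast
    qed
  qed
qed

end
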